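(* Assume (A1)–(A3). Consider AMSGrad: $m_0=0$, $v_0=0$, $\hat v_0=0$, and for $t\ge1$: $m_t=\beta_{1,t}m_{t-1}+(1-\beta_{1,t})g_t$, $v_t=\beta_2v_{t-1}+(1-\beta_2)g_t^2$, $\hat v_t=\max\{\hat v_{t-1},v_t\}$ (coordinatewise), $x_{t+1}=x_t-\alpha_tm_t/\sqrt{\hat v_t}$, with $\beta_2\in[0,1)$, $\alpha_t=1/\sqrt t$, and $\beta_{1,t}\le\beta_1\in[0,1)$ with $(\beta_{1,t})$ non-increasing. Suppose there exists $c>0$ with $|(g_1)_i|\ge c$ for all $i\in[d]$ almost surely. Then there exist constants $Q_1,Q_2$ independent of $T$ such that for every $T\ge1$, $$\min_{t\in[T]}\mathbb{E}\big[\|\nabla f(x_t)\|^2\big]\le\frac{1}{\sqrt T}\big(Q_1+Q_2\log T\big).$$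
   Context: Problem: minimize $f(x)=\mathbb{E}_\xi[f(x;\xi)]$ over $x\in\mathbb{R}^d$; $g_t$ is a stochastic gradient evaluated at $x_t$. All vector operations (division, square root, squaring, max) are coordinatewise; $\|\cdot\|$ is the Euclidean norm; $[T]=\{1,\dots,T\}$. Assumptions: (A1) $f$ is differentiable, $\|\nabla f(x)-\nabla f(y)\|\le L\|x-y\|$ for all $x,y$, and $f$ attains its minimum at some $x^*$ with $f(x^* )>-\infty$. (A2) $\|\nabla f(x)\|\le H$ for all $x$ and $\|g_t\|\le H$ for all $t$ almost surely. (A3) $g_t=\nabla f(x_t)+\zeta_t$ where the noise $\zeta_t$ has zero mean conditionally on $g_1,\dots,g_{t-1}$. Expectations are over all randomness in $\{g_t\}$. *)

theory Defs
  imports "HOL-Probability.Probability"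
begin

text \<open>AMSGrad state after n steps: (x_{n+1}, m_n, v_n, vhat_n), driven by a
  sequence of gradient values gs (gs t is the stochastic gradient g_t, t \<ge> 1).
  b2 is beta_2, b1 is the sequence beta_{1,t}, x1 is the initial point.\<close>
fun amsgrad_state ::
  "real \<Rightarrow> (nat \<Rightarrow> real) \<Rightarrow> real^'d \<Rightarrow> (nat \<Rightarrow> real^'d) \<Rightarrow> nat
     \<Rightarrow> (real^'d) \<times> (real^'d) \<times> (real^'d) \<times> (real^'d)" where
  "amsgrad_state b2 b1 x1 gs 0 = (x1, 0, 0, 0)"
| "amsgrad_state b2 b1 x1 gs (Suc n) =
     (let t = Suc n;
          (x, m, v, vh) = amsgrad_state b2 b1 x1 gs n;
          m' = b1 t *\<^sub>R m + (1 - b1 t) *\<^sub>R gs t;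
          v' = b2 *\<^sub>R v + (1 - b2) *\<^sub>R (\<chi> i. (gs t $ i)^2);
          vh' = (\<chi> i. max (vh $ i) (v' $ i));
          x' = x - (1 / sqrt (real t)) *\<^sub>R (\<chi> i. m' $ i / sqrt (vh' $ i))
      in (x', m', v', vh'))"

text \<open>The iterate x_t (t \<ge> 1); it depends only on gs 1, ..., gs (t-1).\<close>
definition amsgrad_x ::
  "real \<Rightarrow> (nat \<Rightarrow> real) \<Rightarrow> real^'d \<Rightarrow> (nat \<Rightarrow> real^'d) \<Rightarrow> nat \<Rightarrow> real^'d" where
  "amsgrad_x b2 b1 x1 gs t = fst (amsgrad_state b2 b1 x1 gs (t - 1))"

definition past_sigma :: "'w measure \<Rightarrow> (nat \<Rightarrow> 'w \<Rightarrow> real^'d) \<Rightarrow> nat \<Rightarrow> 'w measure" where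
  "past_sigma M g t = sigma (space M)
     (\<Union>s\<in>{1..<t}. {g s -` A \<inter> space M | A. A \<in> sets borel})"

end

theory Submission
  imports Defs
begin

definition "stx b2 b1 x1 gs n = fst (amsgrad_state b2 b1 x1 gs n)"
definition "stm b2 b1 x1 gs n = fst (snd (amsgrad_state b2 b1 x1 gs n))"
definition "stv b2 b1 x1 gs n = fst (snd (snd (amsgrad_state b2 b1 x1 gs n)))"
definition "stvh b2 b1 x1 gs n = snd (snd (snd (amsgrad_state b2 b1 x1 gs n)))"

lemma st0: "stx b2 b1 x1 gs 0 = x1" "stm b2 b1 x1 gs 0 = 0" "stv b2 b1 x1 gs 0 = 0" "stvh b2 b1 x1 gs 0 = 0"
  by (simp_all add: stx_def stm_def stv_def stvh_def)

lemma stSuc: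
  "stm b2 b1 x1 gs (Suc n) = b1 (Suc n) *\<^sub>R stm b2 b1 x1 gs n + (1 - b1 (Suc n)) *\<^sub>R gs (Suc n)"
  "stv b2 b1 x1 gs (Suc n) = b2 *\<^sub>R stv b2 b1 x1 gs n + (1 - b2) *\<^sub>R (\<chi> i. (gs (Suc n) $ i)^2)"
  "stvh b2 b1 x1 gs (Suc n) = (\<chi> i. max (stvh b2 b1 x1 gs n $ i) (stv b2 b1 x1 gs (Suc n) $ i))"
  "stx b2 b1 x1 gs (Suc n) = stx b2 b1 x1 gs n - (1 / sqrt (real (Suc n))) *\<^sub>R
      (\<chi> i. stm b2 b1 x1 gs (Suc n) $ i / sqrt (stvh b2 b1 x1 gs (Suc n) $ i))"
  by (simp_all add: stx_def stm_def stv_def stvh_def Let_def split: prod.split)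

lemma vec_meas:
  fixes F :: "'a \<Rightarrow> real^'d"
  assumes "\<And>i. (\<lambda>x. F x $ i) \<in> borel_measurable M"
  shows "F \<in> borel_measurable M"
proof (rule iffD2[OF borel_measurable_euclidean_space], intro ballI)
  fix b :: "real^'d" assume "b \<in> Basis"
  then obtain i where b: "b = axis i 1" by (auto simp: Basis_vec_def)
  show "(\<lambda>x. F x \<bullet> b) \<in> borel_measurable M" using assms[of i] by (simp add: b inner_axis)
qed

lemma vec_nth_meas: "F \<in> borel_measurable M \<Longrightarrow> (\<lambda>x. (F x :: real^'d) $ i) \<in> borel_measurable M"
proof -
  assume a: "F \<in> borel_measurable M"
  have "(\<lambda>x::real^'d. x $ i) \<in> borel_measurable borel" by (intro borel_measurable_continuous_onI continuous_intros)
  from measurable_compose[OF a this] show ?thesis by simp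
qed

lemma norm_vec_bound:
  fixes x :: "real^'d"
  assumes "\<And>i. \<bar>x $ i\<bar> \<le> B"
  shows "norm x \<le> real CARD('d) * B"
proof -
  have "norm x \<le> (\<Sum>i\<in>UNIV. \<bar>x $ i\<bar>)" by (rule norm_le_l1_cart)
  also have "\<dots> \<le> (\<Sum>i\<in>(UNIV::'d set). B)" by (rule sum_mono) (rule assms)
  finally show ?thesis by simp
qed

lemma inv_sqrt_le1: "n \<ge> 1 \<Longrightarrow> 1 / sqrt (real n) \<le> 1"
  by simp

lemma inv_sqrt_mono: "n \<ge> 1 \<Longrightarrow> n \<le> m \<Longrightarrow> 1 / sqrt (real m) \<le> 1 / sqrt (real n)"
  by (simp add: frac_le)

lemma descent:
  fixes f :: "real^'d \<Rightarrow> real" and grad :: "real^'d \<Rightarrow> real^'d"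
  assumes gder: "\<And>x. GDERIV f x :> grad x"
    and lip: "\<And>x y. norm (grad x - grad y) \<le> L * norm (x - y)"
  shows "f (x + h) \<le> f x + grad x \<bullet> h + \<bar>L\<bar> * (norm h)^2"
proof -
  define \<phi> where "\<phi> = (\<lambda>s::real. f (x + s *\<^sub>R h))"
  have der: "(\<phi> has_derivative (\<lambda>t. grad (x + s *\<^sub>R h) \<bullet> (t *\<^sub>R h))) (at s within {0..1})" for s
  proof -
    have 1: "((\<lambda>s. x + s *\<^sub>R h) has_derivative (\<lambda>t. t *\<^sub>R h)) (at s within {0..1})"
      by (auto intro!: derivative_eq_intros)
    have 2: "(f has_derivative (\<lambda>v. grad (x + s *\<^sub>R h) \<bullet> v)) (at (x + s *\<^sub>R h))"
      using gder[of "x + s *\<^sub>R h"] by (simp add: gderiv_def inner_commute)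
    from has_derivative_compose[OF 1 2] show ?thesis by (simp add: \<phi>_def o_def)
  qed
  obtain s where s: "s \<in> {0<..<1}" and eq: "\<phi> 1 - \<phi> 0 = grad (x + s *\<^sub>R h) \<bullet> ((1 - 0) *\<^sub>R h)"
    using mvt_simple[of 0 1 \<phi> "\<lambda>s t. grad (x + s *\<^sub>R h) \<bullet> (t *\<^sub>R h)"] der by force
  have e1: "f (x + h) - f x = grad x \<bullet> h + (grad (x + s *\<^sub>R h) - grad x) \<bullet> h"
    using eq by (simp add: \<phi>_def inner_diff_left)
  have e2: "(grad (x + s *\<^sub>R h) - grad x) \<bullet> h \<le> norm (grad (x + s *\<^sub>R h) - grad x) * norm h"
    by (rule norm_cauchy_schwarz)
  have e3: "norm (grad (x + s *\<^sub>R h) - grad x) \<le> L * norm (s *\<^sub>R h)"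
    using lip[of "x + s *\<^sub>R h" x] by simp
  have e4: "L * norm (s *\<^sub>R h) \<le> \<bar>L\<bar> * norm h"
  proof -
    have "norm (s *\<^sub>R h) = s * norm h" using s by simp
    moreover have "L * (s * norm h) \<le> \<bar>L\<bar> * (s * norm h)" using s by (intro mult_right_mono) auto
    ultimately have "L * norm (s *\<^sub>R h) \<le> \<bar>L\<bar> * (s * norm h)" by metis
    also have "\<dots> \<le> \<bar>L\<bar> * norm h" using s by (intro mult_left_mono) (auto intro: mult_left_le_one_le)
    finally show ?thesis .
  qed
  have "norm (grad (x + s *\<^sub>R h) - grad x) * norm h \<le> (\<bar>L\<bar> * norm h) * norm h"
    using e3 e4 by (intro mult_right_mono) auto
  with e1 e2 show ?thesis by (simp add: power2_eq_square mult.assoc)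
qed

lemma sum_diff_bound:
  fixes a c :: "'i \<Rightarrow> real"
  assumes "finite I" "\<And>i. \<bar>a i\<bar> \<le> H" "\<And>i. \<bar>c i\<bar> \<le> H" "\<And>i. e' i \<le> e i"
  shows "\<bar>\<Sum>i\<in>I. a i * (e' i - e i) * c i\<bar> \<le> H^2 * (\<Sum>i\<in>I. e i - e' i)"
proof -
  have "\<bar>\<Sum>i\<in>I. a i * (e' i - e i) * c i\<bar> \<le> (\<Sum>i\<in>I. \<bar>a i * (e' i - e i) * c i\<bar>)"
    by (rule sum_abs)
  also have "\<dots> \<le> (\<Sum>i\<in>I. H^2 * (e i - e' i))"
  proof (rule sum_mono)
    fix i
    have "\<bar>a i * (e' i - e i) * c i\<bar> = \<bar>a i\<bar> * \<bar>c i\<bar> * (e i - e' i)"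
      using assms(4)[of i] by (simp add: abs_mult)
    also have "\<dots> \<le> (H * H) * (e i - e' i)"
      using assms(2-4)[of i] by (intro mult_right_mono mult_mono) auto
    finally show "\<bar>a i * (e' i - e i) * c i\<bar> \<le> H^2 * (e i - e' i)" by (simp add: power2_eq_square)
  qed
  finally show ?thesis by (simp add: sum_distrib_left)
qed

definition "ellG b2 c = sqrt (1 - b2) * c"
definition "mmG b2 b1 x1 gs n = stm b2 b1 x1 gs n"
definition "vvG b2 b1 x1 gs n = stv b2 b1 x1 gs n"
definition "vhG b2 b1 x1 gs n = stvh b2 b1 x1 gs n"
definition "etaG b2 b1 x1 gs n i = (1 / sqrt (real n)) / sqrt (vhG b2 b1 x1 gs n $ i)"
definition "XG b2 b1 x1 gs n = amsgrad_x b2 b1 x1 gs n"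
definition "PG b2 b1 x1 gs grad n = (\<Sum>i\<in>UNIV. grad (XG b2 b1 x1 gs n) $ i * etaG b2 b1 x1 gs n i * mmG b2 b1 x1 gs n $ i)"
definition "AG b2 b1 x1 gs grad n = (\<Sum>i\<in>UNIV. grad (XG b2 b1 x1 gs n) $ i * etaG b2 b1 x1 gs (n - 1) i * gs n $ i)"
definition "ErrG b2 b1 x1 gs grad n = PG b2 b1 x1 gs grad n - b1 n * PG b2 b1 x1 gs grad (n - 1) - (1 - b1 n) * AG b2 b1 x1 gs grad n"
definition "ddG (x::real^'d) = real CARD('d)"
definition "KG b2 H c (x::real^'d) = ddG x * H / ellG b2 c"
definition "uG b2 b1 x1 gs n = (\<chi> i. etaG b2 b1 x1 gs n i * mmG b2 b1 x1 gs n $ i)"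

locale det =
  fixes b2 beta1 H c L :: real and b1 :: "nat \<Rightarrow> real" and x1 :: "real^'d"
    and gs :: "nat \<Rightarrow> real^'d" and f :: "real^'d \<Rightarrow> real" and grad :: "real^'d \<Rightarrow> real^'d"
  assumes b2: "0 \<le> b2" "b2 < 1" and beta1: "beta1 < 1"
    and b1r: "\<And>t. t \<ge> 1 \<Longrightarrow> 0 \<le> b1 t \<and> b1 t \<le> beta1"
    and Hpos: "H > 0" and gsb: "\<And>t. t \<ge> 1 \<Longrightarrow> norm (gs t) \<le> H"
    and cpos: "c > 0" and g1: "\<And>i. \<bar>gs 1 $ i\<bar> \<ge> c"
    and gradb: "\<And>x. norm (grad x) \<le> H"
    and lip: "\<And>x y. norm (grad x - grad y) \<le> L * norm (x - y)"
    and gder: "\<And>x. GDERIV f x :> grad x"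
begin

abbreviation "ell \<equiv> ellG b2 c"
lemmas ell_def = ellG_def
abbreviation "mm \<equiv> mmG b2 b1 x1 gs"
lemmas mm_def = mmG_def
abbreviation "vv \<equiv> vvG b2 b1 x1 gs"
lemmas vv_def = vvG_def
abbreviation "vh \<equiv> vhG b2 b1 x1 gs"
lemmas vh_def = vhG_def
abbreviation "eta \<equiv> etaG b2 b1 x1 gs"
lemmas eta_def = etaG_def
abbreviation "X \<equiv> XG b2 b1 x1 gs"
lemmas X_def = XG_def
abbreviation "P \<equiv> PG b2 b1 x1 gs grad"
lemmas P_def = PG_def
abbreviation "A \<equiv> AG b2 b1 x1 gs grad"
lemmas A_def = AG_def
abbreviation "Err \<equiv> ErrG b2 b1 x1 gs grad"
lemmas Err_def = ErrG_def
abbreviation "dd \<equiv> ddG x1"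
lemma dd_def: "dd = real CARD('d)" by (simp add: ddG_def)

lemma ell_pos: "ell > 0" unfolding ell_def using b2 cpos by simp

lemma gs_comp: "t \<ge> 1 \<Longrightarrow> \<bar>gs t $ i\<bar> \<le> H"
  using gsb[of t] component_le_norm_cart[of "gs t" i] by linarith

lemma grad_comp: "\<bar>grad x $ i\<bar> \<le> H"
  using gradb[of x] component_le_norm_cart[of "grad x" i] by linarith

lemma mm_bound: "\<bar>mm n $ i\<bar> \<le> H"
proof (induction n)
  case 0 then show ?case using Hpos by (simp add: mm_def st0)
next
  case (Suc n)
  have b: "0 \<le> b1 (Suc n)" "b1 (Suc n) \<le> 1" using b1r[of "Suc n"] beta1 by auto
  have "\<bar>mm (Suc n) $ i\<bar> = \<bar>b1 (Suc n) * mm n $ i + (1 - b1 (Suc n)) * gs (Suc n) $ i\<bar>"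
    by (simp add: mm_def stSuc)
  also have "\<dots> \<le> b1 (Suc n) * \<bar>mm n $ i\<bar> + (1 - b1 (Suc n)) * \<bar>gs (Suc n) $ i\<bar>"
    using b by (simp add: abs_mult order_trans[OF abs_triangle_ineq])
  also have "\<dots> \<le> b1 (Suc n) * H + (1 - b1 (Suc n)) * H"
    using b Suc gs_comp[of "Suc n" i] by (intro add_mono mult_left_mono) auto
  finally show ?case by (simp add: algebra_simps)
qed

lemma vv_bound: "0 \<le> vv n $ i \<and> vv n $ i \<le> H^2"
proof (induction n)
  case 0 then show ?case using Hpos by (simp add: vv_def st0)
next
  case (Suc n)
  have "\<bar>gs (Suc n) $ i\<bar> \<le> \<bar>H\<bar>" using gs_comp[of "Suc n" i] Hpos by simp
  hence g: "(gs (Suc n) $ i)^2 \<le> H^2" by (simp only: abs_le_square_iff)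
  have e: "vv (Suc n) $ i = b2 * vv n $ i + (1 - b2) * (gs (Suc n) $ i)^2"
    by (simp add: vv_def stSuc)
  have "b2 * vv n $ i \<le> b2 * H^2" using Suc b2 by (intro mult_left_mono) auto
  moreover have "(1 - b2) * (gs (Suc n) $ i)^2 \<le> (1 - b2) * H^2" using g b2 by (intro mult_left_mono) auto
  moreover have "0 \<le> b2 * vv n $ i" "0 \<le> (1 - b2) * (gs (Suc n) $ i)^2" using Suc b2 by auto
  moreover have "b2 * H^2 + (1 - b2) * H^2 = H^2" by (simp add: algebra_simps)
  ultimately show ?case using e by linarith
qed

lemma vh_bound: "0 \<le> vh n $ i \<and> vh n $ i \<le> H^2"
proof (induction n)
  case 0 then show ?case using Hpos by (simp add: vh_def st0)
next
  case (Suc n)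
  have "vh (Suc n) $ i = max (vh n $ i) (vv (Suc n) $ i)"
    by (simp add: vh_def vv_def stSuc del: max_def)
  then show ?case using Suc vv_bound[of "Suc n" i] by (auto simp: max_def)
qed

lemma vh_mono: "vh n $ i \<le> vh (Suc n) $ i"
  by (simp add: vh_def stSuc)

lemma vh_lower1: "vh 1 $ i \<ge> ell^2"
proof -
  have "vh 1 $ i \<ge> vv 1 $ i" by (simp add: vh_def vv_def stSuc)
  moreover have "vv 1 $ i = (1 - b2) * (gs 1 $ i)^2" by (simp add: vv_def stSuc st0)
  moreover have "\<bar>c\<bar> \<le> \<bar>gs 1 $ i\<bar>" using g1[of i] cpos by simp
  hence "(gs 1 $ i)^2 \<ge> c^2" by (simp only: abs_le_square_iff)
  ultimately show ?thesis unfolding ell_def using b2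
    by (simp add: power_mult_distrib) (metis diff_ge_0_iff_ge less_eq_real_def mult_left_mono order_trans)
qed

lemma vh_lower: "n \<ge> 1 \<Longrightarrow> vh n $ i \<ge> ell^2"
proof (induction n rule: dec_induct)
  case base then show ?case using vh_lower1 by simp
next
  case (step n) then show ?case using vh_mono[of n i] by simp
qed

lemma vh_pos: "n \<ge> 1 \<Longrightarrow> vh n $ i > 0"
  using vh_lower[of n i] ell_pos by (meson order_less_le_trans zero_less_power)

lemma sqrt_vh_ge: "n \<ge> 1 \<Longrightarrow> sqrt (vh n $ i) \<ge> ell"
  using vh_lower[of n i] ell_pos real_le_rsqrt by blast

lemma sqrt_vh_le: "sqrt (vh n $ i) \<le> H"
  using vh_bound[of n i] Hpos real_sqrt_le_mono[of "vh n $ i" "H^2"] by simp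

lemma eta0: "eta 0 i = 0" by (simp add: eta_def)

lemma eta_nonneg: "0 \<le> eta n i"
  unfolding eta_def using vh_bound[of n i] by simp

lemma eta_le: "n \<ge> 1 \<Longrightarrow> eta n i \<le> (1 / sqrt (real n)) / ell"
  unfolding eta_def using sqrt_vh_ge[of n i] ell_pos vh_pos[of n i]
  by (intro divide_left_mono) auto

lemma eta_le1: "eta n i \<le> 1 / ell"
proof (cases "n = 0")
  case True then show ?thesis using ell_pos by (simp add: eta0)
next
  case False
  then have "eta n i \<le> (1 / sqrt (real n)) / ell" using eta_le by simp
  also have "\<dots> \<le> 1 / ell" using False ell_pos inv_sqrt_le1[of n]
    by (intro divide_right_mono) auto
  finally show ?thesis .
qed

lemma eta_ge: "n \<ge> 1 \<Longrightarrow> eta n i \<ge> (1 / sqrt (real n)) / H"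
  unfolding eta_def using sqrt_vh_le[of n i] vh_pos[of n i] Hpos
  by (intro divide_left_mono) auto

lemma eta_mono: "n \<ge> 1 \<Longrightarrow> eta (Suc n) i \<le> eta n i"
  unfolding eta_def
proof (rule frac_le)
  assume n: "n \<ge> 1"
  show "0 \<le> 1 / sqrt (real n)" by simp
  show "1 / sqrt (real (Suc n)) \<le> 1 / sqrt (real n)" using n by (intro inv_sqrt_mono) auto
  show "0 < sqrt (vh n $ i)" using vh_pos[OF n] by simp
  show "sqrt (vh n $ i) \<le> sqrt (vh (Suc n) $ i)" using vh_mono by simp
qed

abbreviation "u \<equiv> uG b2 b1 x1 gs"
lemmas u_def = uG_def

lemma X1: "X 1 = x1" "X (Suc 0) = x1" by (simp_all add: X_def amsgrad_x_def)

lemma X_Suc: "n \<ge> 1 \<Longrightarrow> X (Suc n) = X n - u n"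
proof -
  assume n: "n \<ge> 1"
  then obtain k where k: "n = Suc k" by (cases n) auto
  have 1: "X (Suc n) = stx b2 b1 x1 gs (Suc k)" by (simp add: X_def amsgrad_x_def stx_def k)
  have 2: "X n = stx b2 b1 x1 gs k" by (simp add: X_def amsgrad_x_def stx_def k)
  show ?thesis unfolding 1 2 stSuc(4) u_def
    by (simp add: vec_eq_iff eta_def mm_def vh_def k)
qed

lemma w_comp: "\<bar>(\<chi> i. eta n i * mm k $ i) $ i\<bar> \<le> H * (1 / sqrt (real n)) / ell"
proof (cases "n = 0")
  case True then show ?thesis using Hpos ell_pos by (simp add: eta0)
next
  case False
  have "\<bar>(\<chi> i. eta n i * mm k $ i) $ i\<bar> = eta n i * \<bar>mm k $ i\<bar>" by (simp add: abs_mult eta_nonneg)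
  also have "\<dots> \<le> ((1 / sqrt (real n)) / ell) * H"
    using eta_le[of n i] False mm_bound[of k i] eta_nonneg[of n i] Hpos ell_pos
    by (intro mult_mono) auto
  finally show ?thesis by simp
qed

abbreviation "K \<equiv> KG b2 H c x1"
lemma K_def: "K = dd * H / ell" by (simp add: KG_def)

lemma K_pos: "K > 0" unfolding K_def dd_def using Hpos ell_pos by simp

lemma w_norm: "norm (\<chi> i. eta n i * mm k $ i) \<le> K * (1 / sqrt (real n))"
  using norm_vec_bound[of "\<chi> i. eta n i * mm k $ i" "H * (1 / sqrt (real n)) / ell", OF w_comp]
  by (simp add: K_def dd_def mult.commute)

lemma u_norm: "norm (u n) \<le> K * (1 / sqrt (real n))"
  using w_norm[of n n] by (simp add: u_def)

lemma P_inner: "P n = grad (X n) \<bullet> u n"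
  by (simp add: P_def u_def inner_vec_def mult.assoc)

lemma descent_step: "n \<ge> 1 \<Longrightarrow> f (X (Suc n)) \<le> f (X n) - P n + \<bar>L\<bar> * K^2 / real n"
proof -
  assume n: "n \<ge> 1"
  have "f (X (Suc n)) = f (X n + (- u n))" using X_Suc[OF n] by simp
  also have "\<dots> \<le> f (X n) + grad (X n) \<bullet> (- u n) + \<bar>L\<bar> * (norm (- u n))^2"
    by (rule descent[OF gder lip])
  also have "(norm (- u n))^2 \<le> (K * (1 / sqrt (real n)))^2"
    using u_norm[of n] by (simp add: power_mono)
  also have "(K * (1 / sqrt (real n)))^2 = K^2 / real n" using n by (simp add: power_divide power_mult_distrib)
  finally show ?thesis by (simp add: P_inner mult_left_mono divide_simps)
qed

lemma descent_sum: "(\<Sum>n=1..T. P n) \<le> f x1 - f (X (Suc T)) + \<bar>L\<bar> * K^2 * harm T"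
proof (induction T)
  case 0 then show ?case by (simp add: X1 harm_def)
next
  case (Suc T)
  have "(\<Sum>n=1..Suc T. P n) = (\<Sum>n=1..T. P n) + P (Suc T)" by simp
  also have "\<dots> \<le> f x1 - f (X (Suc T)) + \<bar>L\<bar> * K^2 * harm T + (f (X (Suc T)) - f (X (Suc (Suc T))) + \<bar>L\<bar> * K^2 / real (Suc T))"
    using Suc descent_step[of "Suc T"] by simp
  also have "\<dots> = f x1 - f (X (Suc (Suc T))) + \<bar>L\<bar> * K^2 * harm (Suc T)"
    by (simp add: harm_Suc algebra_simps divide_inverse)
  finally show ?case .
qed

lemma P_bound: "\<bar>P n\<bar> \<le> dd * H^2 / ell"
proof -
  have "\<bar>P n\<bar> \<le> (\<Sum>i\<in>UNIV. \<bar>grad (X n) $ i * eta n i * mm n $ i\<bar>)" unfolding P_def by (rule sum_abs)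
  also have "\<dots> \<le> (\<Sum>i\<in>(UNIV::'d set). H * (1 / ell) * H)"
  proof (rule sum_mono)
    fix i
    show "\<bar>grad (X n) $ i * eta n i * mm n $ i\<bar> \<le> H * (1 / ell) * H"
      unfolding abs_mult using grad_comp eta_le1 mm_bound eta_nonneg Hpos ell_pos
      by (intro mult_mono) (auto intro: mult_nonneg_nonneg)
  qed
  finally show ?thesis by (simp add: dd_def power2_eq_square)
qed

lemma A_bound: "n \<ge> 1 \<Longrightarrow> \<bar>A n\<bar> \<le> dd * H^2 / ell"
proof -
  assume n: "n \<ge> 1"
  have "\<bar>A n\<bar> \<le> (\<Sum>i\<in>UNIV. \<bar>grad (X n) $ i * eta (n - 1) i * gs n $ i\<bar>)" unfolding A_def by (rule sum_abs)
  also have "\<dots> \<le> (\<Sum>i\<in>(UNIV::'d set). H * (1 / ell) * H)"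
  proof (rule sum_mono)
    fix i
    show "\<bar>grad (X n) $ i * eta (n - 1) i * gs n $ i\<bar> \<le> H * (1 / ell) * H"
      unfolding abs_mult using grad_comp eta_le1 gs_comp[OF n] eta_nonneg Hpos ell_pos
      by (intro mult_mono) (auto intro: mult_nonneg_nonneg)
  qed
  finally show ?thesis by (simp add: dd_def power2_eq_square)
qed

lemma P0: "P 0 = 0" by (simp add: P_def eta0)
lemma A1: "A 1 = 0" "A (Suc 0) = 0" by (simp_all add: A_def eta0)

lemma Err1: "\<bar>Err 1\<bar> \<le> dd * H^2 / ell"
proof -
  have "Err 1 = P 1" by (simp add: Err_def P0 A1)
  then show ?thesis using P_bound[of 1] by simp
qed

lemma Err_step: "j \<ge> 1 \<Longrightarrow> \<bar>Err (Suc j)\<bar> \<le> \<bar>L\<bar> * K^2 / real j + 2 * H^2 * (\<Sum>i\<in>UNIV. eta j i - eta (Suc j) i)"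
proof -
  assume j: "j \<ge> 1"
  define G' where "G' = grad (X (Suc j))"
  define G where "G = grad (X j)"
  define b where "b = b1 (Suc j)"
  have b: "0 \<le> b" "b \<le> 1" using b1r[of "Suc j"] beta1 by (auto simp: b_def)
  define S1 where "S1 = (\<Sum>i\<in>UNIV. (G' $ i - G $ i) * eta (Suc j) i * mm j $ i)"
  define S2 where "S2 = (\<Sum>i\<in>UNIV. G $ i * (eta (Suc j) i - eta j i) * mm j $ i)"
  define S3 where "S3 = (\<Sum>i\<in>UNIV. G' $ i * (eta (Suc j) i - eta j i) * gs (Suc j) $ i)"
  have mmS: "mm (Suc j) $ i = b * mm j $ i + (1 - b) * gs (Suc j) $ i" for i
    by (simp add: mm_def stSuc b_def)
  have "Err (Suc j) = (\<Sum>i\<in>UNIV. G' $ i * eta (Suc j) i * (b * mm j $ i + (1 - b) * gs (Suc j) $ i))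
      - b * (\<Sum>i\<in>UNIV. G $ i * eta j i * mm j $ i) - (1 - b) * (\<Sum>i\<in>UNIV. G' $ i * eta j i * gs (Suc j) $ i)"
    by (simp add: Err_def P_def A_def mmS G'_def G_def b_def)
  also have "\<dots> = b * (S1 + S2) + (1 - b) * S3"
    unfolding S1_def S2_def S3_def sum_distrib_left sum.distrib[symmetric] sum_subtractf[symmetric] distrib_left
    by (rule sum.cong) (auto simp: algebra_simps)
  finally have E: "Err (Suc j) = b * (S1 + S2) + (1 - b) * S3" .
  have "\<bar>Err (Suc j)\<bar> \<le> b * (\<bar>S1\<bar> + \<bar>S2\<bar>) + (1 - b) * \<bar>S3\<bar>"
  proof -
    have "\<bar>b * (S1 + S2) + (1 - b) * S3\<bar> \<le> \<bar>b * (S1 + S2)\<bar> + \<bar>(1 - b) * S3\<bar>" by (rule abs_triangle_ineq)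
    also have "\<dots> = b * \<bar>S1 + S2\<bar> + (1 - b) * \<bar>S3\<bar>" using b by (simp add: abs_mult)
    also have "\<dots> \<le> b * (\<bar>S1\<bar> + \<bar>S2\<bar>) + (1 - b) * \<bar>S3\<bar>" using b
      by (intro add_mono mult_left_mono abs_triangle_ineq) auto
    finally show ?thesis unfolding E .
  qed
  also have "\<dots> \<le> \<bar>S1\<bar> + \<bar>S2\<bar> + \<bar>S3\<bar>"
  proof -
    have "b * (\<bar>S1\<bar> + \<bar>S2\<bar>) \<le> \<bar>S1\<bar> + \<bar>S2\<bar>" using b by (intro mult_left_le_one_le) auto
    moreover have "(1 - b) * \<bar>S3\<bar> \<le> \<bar>S3\<bar>" using b by (intro mult_left_le_one_le) auto
    ultimately show ?thesis by linarith
  qed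
  also have "\<bar>S1\<bar> \<le> \<bar>L\<bar> * K^2 / real j"
  proof -
    have "S1 = (G' - G) \<bullet> (\<chi> i. eta (Suc j) i * mm j $ i)" by (simp add: S1_def inner_vec_def mult.assoc)
    hence "\<bar>S1\<bar> \<le> norm (G' - G) * norm (\<chi> i. eta (Suc j) i * mm j $ i)" using Cauchy_Schwarz_ineq2 by simp
    also have "\<dots> \<le> (\<bar>L\<bar> * norm (u j)) * (K * (1 / sqrt (real (Suc j))))"
    proof (rule mult_mono)
      have "norm (G' - G) \<le> L * norm (X (Suc j) - X j)" unfolding G'_def G_def by (rule lip)
      also have "\<dots> = L * norm (u j)" using X_Suc[OF j] by simp
      also have "\<dots> \<le> \<bar>L\<bar> * norm (u j)" by (intro mult_right_mono) auto
      finally show "norm (G' - G) \<le> \<bar>L\<bar> * norm (u j)" .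
    qed (rule w_norm, simp_all)
    also have "\<dots> \<le> (\<bar>L\<bar> * (K * (1 / sqrt (real j)))) * (K * (1 / sqrt (real (Suc j))))"
      using u_norm[of j] K_pos by (intro mult_right_mono mult_left_mono) auto
    also have "\<dots> = \<bar>L\<bar> * K^2 * (1 / (sqrt (real j) * sqrt (real (Suc j))))"
      by (simp add: power2_eq_square)
    also have "\<dots> \<le> \<bar>L\<bar> * K^2 * (1 / real j)"
    proof (intro mult_left_mono)
      have "sqrt (real j) * sqrt (real j) \<le> sqrt (real j) * sqrt (real (Suc j))"
        by (intro mult_left_mono) auto
      hence "real j \<le> sqrt (real j) * sqrt (real (Suc j))" by simp
      thus "1 / (sqrt (real j) * sqrt (real (Suc j))) \<le> 1 / real j" using j
        by (intro divide_left_mono) auto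
    qed auto
    finally show ?thesis by simp
  qed
  also have "\<bar>S2\<bar> \<le> H^2 * (\<Sum>i\<in>UNIV. eta j i - eta (Suc j) i)"
    unfolding S2_def G_def using grad_comp mm_bound eta_mono[OF j]
    by (intro sum_diff_bound) auto
  also have "\<bar>S3\<bar> \<le> H^2 * (\<Sum>i\<in>UNIV. eta j i - eta (Suc j) i)"
    unfolding S3_def G'_def using grad_comp gs_comp[of "Suc j"] eta_mono[OF j]
    by (intro sum_diff_bound) auto
  finally show ?thesis by simp
qed

lemma Err_sum_aux: "T \<ge> 1 \<Longrightarrow> (\<Sum>n=1..T. \<bar>Err n\<bar>) \<le> dd * H^2 / ell + \<bar>L\<bar> * K^2 * harm (T - 1)
     + 2 * H^2 * (\<Sum>i\<in>UNIV. eta 1 i - eta T i)"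
proof (induction T rule: dec_induct)
  case base then show ?case using Err1 by (simp add: harm_def)
next
  case (step T)
  have h: "harm (Suc T - 1) = harm (T - 1) + 1 / real T"
    using step(1) harm_Suc[of "T - 1"] by (simp add: divide_inverse)
  have "(\<Sum>n=1..Suc T. \<bar>Err n\<bar>) = (\<Sum>n=1..T. \<bar>Err n\<bar>) + \<bar>Err (Suc T)\<bar>" by simp
  also have "\<dots> \<le> (dd * H^2 / ell + \<bar>L\<bar> * K^2 * harm (T - 1) + 2 * H^2 * (\<Sum>i\<in>UNIV. eta 1 i - eta T i))
      + (\<bar>L\<bar> * K^2 / real T + 2 * H^2 * (\<Sum>i\<in>UNIV. eta T i - eta (Suc T) i))"
    using step Err_step[of T] by (intro add_mono) auto
  also have "\<dots> = dd * H^2 / ell + \<bar>L\<bar> * K^2 * harm (Suc T - 1) + 2 * H^2 * (\<Sum>i\<in>UNIV. eta 1 i - eta (Suc T) i)"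
    unfolding h by (simp add: algebra_simps sum_subtractf)
  finally show ?case .
qed

lemma Err_sum: "T \<ge> 1 \<Longrightarrow> (\<Sum>n=1..T. \<bar>Err n\<bar>) \<le> 3 * dd * H^2 / ell + \<bar>L\<bar> * K^2 * harm T"
proof -
  assume T: "T \<ge> 1"
  have h: "harm (T - 1) \<le> (harm T :: real)"
    using T by (cases T) (simp_all add: harm_Suc)
  have e: "(\<Sum>i\<in>UNIV. eta 1 i - eta T i) \<le> (\<Sum>i\<in>(UNIV::'d set). 1 / ell)"
    using eta_le1 eta_nonneg by (intro sum_mono) (smt (verit))
  have "(\<Sum>n=1..T. \<bar>Err n\<bar>) \<le> dd * H^2 / ell + \<bar>L\<bar> * K^2 * harm (T - 1) + 2 * H^2 * (\<Sum>i\<in>UNIV. eta 1 i - eta T i)"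
    using Err_sum_aux[OF T] .
  also have "\<dots> \<le> dd * H^2 / ell + \<bar>L\<bar> * K^2 * harm T + 2 * H^2 * (dd / ell)"
    using h e by (intro add_mono mult_left_mono) (auto simp: dd_def)
  finally show ?thesis by (simp add: field_simps)
qed

lemma B_lower: "n \<ge> 1 \<Longrightarrow> (\<Sum>i\<in>UNIV. (grad (X n) $ i)^2 * eta (n - 1) i) \<ge> (1 / sqrt (real (n - 1))) / H * (norm (grad (X n)))^2"
proof -
  assume n: "n \<ge> 1"
  have nn: "(norm (grad (X n)))^2 = (\<Sum>i\<in>UNIV. (grad (X n) $ i)^2)"
    unfolding power2_norm_eq_inner inner_vec_def by (simp add: power2_eq_square)
  show ?thesis
  proof (cases "n = 1")
    case True then show ?thesis by (simp add: eta0)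
  next
    case False
    then have n2: "n - 1 \<ge> 1" using n by simp
    show ?thesis unfolding nn sum_distrib_left
    proof (intro sum_mono)
      fix i
      have "(1 / sqrt (real (n - 1))) / H * (grad (X n) $ i)^2 \<le> eta (n - 1) i * (grad (X n) $ i)^2"
        using eta_ge[OF n2, of i] by (intro mult_right_mono) auto
      then show "(1 / sqrt (real (n - 1))) / H * (grad (X n) $ i)^2 \<le> (grad (X n) $ i)^2 * eta (n - 1) i"
        by (simp add: mult.commute)
    qed
  qed
qed

end

lemma seq_lemma:
  fixes p a e b :: "nat \<Rightarrow> real" and \<beta> :: real
  assumes p0: "p 0 = 0"
    and rec: "\<And>t. t \<ge> 1 \<Longrightarrow> p t \<ge> b t * p (t - 1) + (1 - b t) * a t - e t"
    and b: "\<And>t. t \<ge> 1 \<Longrightarrow> 0 \<le> b t \<and> b t \<le> \<beta>" and \<beta>: "\<beta> < 1"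
    and a: "\<And>t. t \<ge> 1 \<Longrightarrow> a t \<ge> 0" and e: "\<And>t. t \<ge> 1 \<Longrightarrow> e t \<ge> 0"
  shows "(1 - \<beta>) * (\<Sum>t=1..T. a t) \<le> (\<Sum>t=1..T. p t) + (\<Sum>t=1..T. e t) / (1 - \<beta>)"
proof -
  define Y where "Y = rec_nat 0 (\<lambda>t y. b (Suc t) * y + (1 - b (Suc t)) * a (Suc t))"
  define Z where "Z = rec_nat 0 (\<lambda>t z. b (Suc t) * z + e (Suc t))"
  have Y0: "Y 0 = 0" and YS: "Y (Suc t) = b (Suc t) * Y t + (1 - b (Suc t)) * a (Suc t)" for t
    by (simp_all add: Y_def)
  have Z0: "Z 0 = 0" and ZS: "Z (Suc t) = b (Suc t) * Z t + e (Suc t)" for t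
    by (simp_all add: Z_def)
  have bS: "0 \<le> b (Suc t)" "b (Suc t) \<le> \<beta>" for t using b[of "Suc t"] by auto
  have Ynn: "Y t \<ge> 0" for t
  proof (induction t)
    case 0 then show ?case by (simp add: Y0)
  next
    case (Suc t) then show ?case using bS[of t] \<beta> a[of "Suc t"] by (simp add: YS)
  qed
  have Znn: "Z t \<ge> 0" for t
  proof (induction t)
    case 0 then show ?case by (simp add: Z0)
  next
    case (Suc t) then show ?case using bS[of t] e[of "Suc t"] by (simp add: ZS)
  qed
  have pYZ: "p t \<ge> Y t - Z t" for t
  proof (induction t)
    case 0 then show ?case by (simp add: Y0 Z0 p0)
  next
    case (Suc t)
    have "b (Suc t) * (Y t - Z t) \<le> b (Suc t) * p t" using Suc bS[of t] by (intro mult_left_mono) auto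
    then show ?case using rec[of "Suc t"] by (simp add: YS ZS algebra_simps)
  qed
  have Ya: "Y (Suc t) \<ge> (1 - \<beta>) * a (Suc t)" for t
  proof -
    have "(1 - \<beta>) * a (Suc t) \<le> (1 - b (Suc t)) * a (Suc t)" using bS[of t] a[of "Suc t"] by (intro mult_right_mono) auto
    moreover have "0 \<le> b (Suc t) * Y t" using bS[of t] Ynn[of t] by simp
    ultimately show ?thesis by (simp add: YS)
  qed
  have Zsum: "(1 - \<beta>) * (\<Sum>t=1..T. Z t) + \<beta> * Z T \<le> (\<Sum>t=1..T. e t)" for T
  proof (induction T)
    case 0 then show ?case by (simp add: Z0)
  next
    case (Suc T)
    have "b (Suc T) * Z T \<le> \<beta> * Z T" using bS[of T] Znn[of T] by (intro mult_right_mono) auto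
    then show ?case using Suc by (simp add: ZS algebra_simps)
  qed
  have "(1 - \<beta>) * (\<Sum>t=1..T. a t) = (\<Sum>t=1..T. (1 - \<beta>) * a t)" by (simp add: sum_distrib_left)
  also have "\<dots> \<le> (\<Sum>t=1..T. Y t)"
  proof (rule sum_mono)
    fix t assume "t \<in> {1..T}"
    then obtain s where "t = Suc s" by (cases t) auto
    then show "(1 - \<beta>) * a t \<le> Y t" using Ya by simp
  qed
  also have "\<dots> \<le> (\<Sum>t=1..T. p t) + (\<Sum>t=1..T. Z t)"
    using pYZ by (simp add: sum.distrib[symmetric] sum_mono add.commute diff_le_eq)
  also have "(\<Sum>t=1..T. Z t) \<le> (\<Sum>t=1..T. e t) / (1 - \<beta>)"
  proof -
    have "(1 - \<beta>) * (\<Sum>t=1..T. Z t) \<le> (\<Sum>t=1..T. e t)"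
      using Zsum[of T] b \<beta> Znn[of T] bS[of 0] by (smt (verit) mult_nonneg_nonneg)
    then show ?thesis using \<beta> by (simp add: field_simps)
  qed
  finally show ?thesis by simp
qed

lemma state_meas:
  fixes G :: "nat \<Rightarrow> 'w \<Rightarrow> real^'d"
  assumes "\<And>s. 1 \<le> s \<Longrightarrow> s \<le> n \<Longrightarrow> G s \<in> borel_measurable N"
  shows "(\<lambda>\<omega>. stx b2 b1 x1 (\<lambda>s. G s \<omega>) n) \<in> borel_measurable N \<and>
         (\<lambda>\<omega>. stm b2 b1 x1 (\<lambda>s. G s \<omega>) n) \<in> borel_measurable N \<and>
         (\<lambda>\<omega>. stv b2 b1 x1 (\<lambda>s. G s \<omega>) n) \<in> borel_measurable N \<and>
         (\<lambda>\<omega>. stvh b2 b1 x1 (\<lambda>s. G s \<omega>) n) \<in> borel_measurable N"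
  using assms
proof (induction n)
  case 0 then show ?case by (simp add: st0)
next
  case (Suc n)
  have IH: "(\<lambda>\<omega>. stx b2 b1 x1 (\<lambda>s. G s \<omega>) n) \<in> borel_measurable N"
     "(\<lambda>\<omega>. stm b2 b1 x1 (\<lambda>s. G s \<omega>) n) \<in> borel_measurable N"
     "(\<lambda>\<omega>. stv b2 b1 x1 (\<lambda>s. G s \<omega>) n) \<in> borel_measurable N"
     "(\<lambda>\<omega>. stvh b2 b1 x1 (\<lambda>s. G s \<omega>) n) \<in> borel_measurable N"
    using Suc by auto
  have g: "G (Suc n) \<in> borel_measurable N" using Suc.prems by auto
  note c = vec_nth_meas[OF IH(1)] vec_nth_meas[OF IH(2)] vec_nth_meas[OF IH(3)] vec_nth_meas[OF IH(4)]
    vec_nth_meas[OF g]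
  have m: "(\<lambda>\<omega>. stm b2 b1 x1 (\<lambda>s. G s \<omega>) (Suc n)) \<in> borel_measurable N"
    unfolding stSuc by (rule vec_meas) (simp, intro borel_measurable_add borel_measurable_times c borel_measurable_const)
  have v: "(\<lambda>\<omega>. stv b2 b1 x1 (\<lambda>s. G s \<omega>) (Suc n)) \<in> borel_measurable N"
    unfolding stSuc by (rule vec_meas) (simp, intro borel_measurable_add borel_measurable_times borel_measurable_power c borel_measurable_const)
  note c2 = vec_nth_meas[OF m] vec_nth_meas[OF v]
  have vh: "(\<lambda>\<omega>. stvh b2 b1 x1 (\<lambda>s. G s \<omega>) (Suc n)) \<in> borel_measurable N"
    unfolding stSuc(3) by (rule vec_meas) (simp, intro borel_measurable_max c c2)
  note c3 = vec_nth_meas[OF vh]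
  have c4: "(\<lambda>\<omega>. sqrt (stvh b2 b1 x1 (\<lambda>s. G s \<omega>) (Suc n) $ i)) \<in> borel_measurable N" for i
    using measurable_compose[OF c3 borel_measurable_sqrt] by simp
  have x: "(\<lambda>\<omega>. stx b2 b1 x1 (\<lambda>s. G s \<omega>) (Suc n)) \<in> borel_measurable N"
    unfolding stSuc(4)[of b2 b1 x1 _ n]
    by (rule vec_meas) (simp, intro borel_measurable_diff borel_measurable_times borel_measurable_divide
        c4 c c2 c3 borel_measurable_const)
  show ?case using m v vh x by simp
qed

lemma past_sigma_sub:
  assumes "\<And>t. g t \<in> borel_measurable M"
  shows "subalgebra M (past_sigma M g t)"
proof -
  let ?G = "(\<Union>s\<in>{1..<t}. {g s -` A \<inter> space M | A. A \<in> sets borel})"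
  have GM: "?G \<subseteq> sets M" using assms measurable_sets by blast
  hence GP: "?G \<subseteq> Pow (space M)" using sets.sets_into_space by blast
  have sp: "space (past_sigma M g t) = space M" unfolding past_sigma_def using GP by simp
  have "sets (past_sigma M g t) = sigma_sets (space M) ?G" unfolding past_sigma_def using GP by simp
  also have "\<dots> \<subseteq> sets M" using GM by (rule sets.sigma_sets_subset)
  finally show ?thesis unfolding subalgebra_def using sp by simp
qed

lemma past_sigma_meas:
  fixes g :: "nat \<Rightarrow> 'w \<Rightarrow> real^'d"
  assumes "\<And>t. g t \<in> borel_measurable M" "1 \<le> s" "s < t"
  shows "g s \<in> borel_measurable (past_sigma M g t)"
proof -
  let ?G = "(\<Union>s\<in>{1..<t}. {g s -` A \<inter> space M | A. A \<in> sets borel})"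
  have GM: "?G \<subseteq> sets M" using assms measurable_sets by blast
  hence GP: "?G \<subseteq> Pow (space M)" using sets.sets_into_space by blast
  have sp: "space (past_sigma M g t) = space M" unfolding past_sigma_def using GP by simp
  have ss: "sets (past_sigma M g t) = sigma_sets (space M) ?G" unfolding past_sigma_def using GP by simp
  show ?thesis
  proof (rule measurableI)
    fix A :: "(real^'d) set" assume "A \<in> sets borel"
    then have "g s -` A \<inter> space M \<in> ?G" using assms(2,3) by (intro UN_I[of s]) auto
    then show "g s -` A \<inter> space (past_sigma M g t) \<in> sets (past_sigma M g t)"
      unfolding sp ss by auto
  qed simp
qed

lemma lip_cont:
  fixes grad :: "real^'d \<Rightarrow> real^'d"
  assumes lip: "\<And>x y. norm (grad x - grad y) \<le> L * norm (x - y)"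
  shows "grad \<in> borel_measurable borel"
proof -
  have "continuous_on UNIV grad"
  proof (rule lipschitz_on_continuous_on)
    show "(max L 0)-lipschitz_on UNIV grad" unfolding lipschitz_on_def dist_norm
      using lip by (auto intro: order_trans[OF _ mult_right_mono[of L "max L 0"]])
  qed
  then show ?thesis by (rule borel_measurable_continuous_onI)
qed

lemma meas_X:
  fixes G :: "nat \<Rightarrow> 'w \<Rightarrow> real^'d"
  assumes "\<And>s. 1 \<le> s \<Longrightarrow> s < t \<Longrightarrow> G s \<in> borel_measurable N"
  shows "(\<lambda>\<omega>. amsgrad_x b2 b1 x1 (\<lambda>s. G s \<omega>) t) \<in> borel_measurable N"
  using state_meas[of "t - 1" G N b2 b1 x1] assms unfolding amsgrad_x_def stx_def by fastforce

lemma meas_mm: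
  fixes G :: "nat \<Rightarrow> 'w \<Rightarrow> real^'d"
  assumes "\<And>s. 1 \<le> s \<Longrightarrow> s \<le> n \<Longrightarrow> G s \<in> borel_measurable N"
  shows "(\<lambda>\<omega>. stm b2 b1 x1 (\<lambda>s. G s \<omega>) n $ i) \<in> borel_measurable N"
  using state_meas[of n G N b2 b1 x1] assms by (intro vec_nth_meas) auto

lemma meas_vh:
  fixes G :: "nat \<Rightarrow> 'w \<Rightarrow> real^'d"
  assumes "\<And>s. 1 \<le> s \<Longrightarrow> s \<le> n \<Longrightarrow> G s \<in> borel_measurable N"
  shows "(\<lambda>\<omega>. stvh b2 b1 x1 (\<lambda>s. G s \<omega>) n $ i) \<in> borel_measurable N"
  using state_meas[of n G N b2 b1 x1] assms by (intro vec_nth_meas) auto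

lemma meas_sqrt_vh:
  fixes G :: "nat \<Rightarrow> 'w \<Rightarrow> real^'d"
  assumes "\<And>s. 1 \<le> s \<Longrightarrow> s \<le> n \<Longrightarrow> G s \<in> borel_measurable N"
  shows "(\<lambda>\<omega>. sqrt (stvh b2 b1 x1 (\<lambda>s. G s \<omega>) n $ i)) \<in> borel_measurable N"
  using measurable_compose[OF meas_vh[OF assms] borel_measurable_sqrt] by simp

lemma harm_le_ln: "n \<ge> 1 \<Longrightarrow> (harm n :: real) \<le> 1 + ln (real n)"
proof -
  assume "n \<ge> 1" then obtain k where k: "n = Suc k" by (cases n) auto
  have "harm (Suc k) - ln (real (Suc k)) \<le> (harm (Suc 0) :: real) - ln (real (Suc 0))"
    using decseq_harm_diff_ln unfolding decseq_def by (metis le0 of_nat_Suc)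
  then show ?thesis by (simp add: k harm_def)
qed

lemma sum_inv_sqrt: "T \<ge> 1 \<Longrightarrow> sqrt (real T) \<le> (\<Sum>t=1..T. 1 / sqrt (real t))"
proof -
  assume T: "T \<ge> 1"
  have "(\<Sum>t=1..T. 1 / sqrt (real T)) \<le> (\<Sum>t=1..T. 1 / sqrt (real t))"
    by (intro sum_mono) (auto simp: frac_le)
  moreover have "(\<Sum>t=1..T. 1 / sqrt (real T)) = sqrt (real T)"
    using T by (simp add: real_div_sqrt)
  ultimately show ?thesis by simp
qed

theorem corollary1:
  fixes M :: "'w measure"
    and f :: "real^'d \<Rightarrow> real" and grad :: "real^'d \<Rightarrow> real^'d"
    and g zeta :: "nat \<Rightarrow> 'w \<Rightarrow> real^'d"
    and L H c beta1 beta2 :: real and b1 :: "nat \<Rightarrow> real" and x1 :: "real^'d"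
  assumes prob: "prob_space M"
    and grad: "\<And>x. GDERIV f x :> grad x"
    and lip: "\<And>x y. norm (grad x - grad y) \<le> L * norm (x - y)"
    and minimum: "\<exists>xs. \<forall>x. f xs \<le> f x"
    and grad_bound: "\<And>x. norm (grad x) \<le> H"
    and g_meas: "\<And>t. g t \<in> borel_measurable M"
    and g_bound: "\<And>t. t \<ge> 1 \<Longrightarrow> AE \<omega> in M. norm (g t \<omega>) \<le> H"
    and noise: "\<And>t \<omega>. t \<ge> 1 \<Longrightarrow> \<omega> \<in> space M \<Longrightarrow>
        g t \<omega> = grad (amsgrad_x beta2 b1 x1 (\<lambda>s. g s \<omega>) t) + zeta t \<omega>"
    and noise_mean: "\<And>t i. t \<ge> 1 \<Longrightarrow>
        AE \<omega> in M. real_cond_exp M (past_sigma M g t) (\<lambda>\<omega>. zeta t \<omega> $ i) \<omega> = 0"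
    and beta2: "0 \<le> beta2" "beta2 < 1"
    and beta1: "0 \<le> beta1" "beta1 < 1"
    and b1_range: "\<And>t. t \<ge> 1 \<Longrightarrow> 0 \<le> b1 t \<and> b1 t \<le> beta1"
    and b1_noninc: "\<And>t. t \<ge> 1 \<Longrightarrow> b1 (Suc t) \<le> b1 t"
    and c_pos: "c > 0"
    and g1_lower: "AE \<omega> in M. \<forall>i. \<bar>g 1 \<omega> $ i\<bar> \<ge> c"
  shows "\<exists>Q1 Q2. \<forall>T::nat. T \<ge> 1 \<longrightarrow>
     Min ((\<lambda>t. \<integral>\<omega>. (norm (grad (amsgrad_x beta2 b1 x1 (\<lambda>s. g s \<omega>) t)))^2 \<partial>M) ` {1..T})
       \<le> (Q1 + Q2 * ln (real T)) / sqrt (real T)"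
proof -
  interpret prob_space M by (rule prob)
  note prob_space[simp]
  define Hp where "Hp = H + 1"
  have H0: "0 \<le> H" using grad_bound[of 0] norm_ge_zero[of "grad 0"] by linarith
  have Hp: "Hp > 0" using H0 by (simp add: Hp_def)
  have gb: "norm (grad x) \<le> Hp" for x using grad_bound[of x] by (simp add: Hp_def)
  obtain xs where xs: "\<forall>x. f xs \<le> f x" using minimum by blast
  define fmin where "fmin = f xs"
  have fmin: "fmin \<le> f x" for x using xs by (simp add: fmin_def)
  have gAE: "AE \<omega> in M. \<forall>t. 1 \<le> t \<longrightarrow> norm (g t \<omega>) \<le> H"
    unfolding AE_all_countable
  proof
    fix t :: nat
    show "AE \<omega> in M. 1 \<le> t \<longrightarrow> norm (g t \<omega>) \<le> H"
    proof (cases "1 \<le> t")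
      case True then show ?thesis using g_bound[OF True] by (auto elim: AE_mp)
    qed simp
  qed
  have DAE: "AE \<omega> in M. det beta2 beta1 Hp c L b1 (\<lambda>s. g s \<omega>) f grad"
    using gAE g1_lower
  proof eventually_elim
    case (elim \<omega>)
    show ?case unfolding det_def using elim beta2 beta1 b1_range c_pos gb lip grad Hp
      by (auto simp: Hp_def)
  qed
  define X where "X t \<omega> = amsgrad_x beta2 b1 x1 (\<lambda>s. g s \<omega>) t" for t \<omega>
  define PP where "PP t \<omega> = PG beta2 b1 x1 (\<lambda>s. g s \<omega>) grad t" for t \<omega>
  define AA where "AA t \<omega> = AG beta2 b1 x1 (\<lambda>s. g s \<omega>) grad t" for t \<omega>
  define EE where "EE t \<omega> = ErrG beta2 b1 x1 (\<lambda>s. g s \<omega>) grad t" for t \<omega>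
  define GN where "GN t \<omega> = (norm (grad (X t \<omega>)))^2" for t \<omega>
  define ell where "ell = ellG beta2 c"
  define K where "K = KG beta2 Hp c x1"
  define dd where "dd = ddG x1"
  have ellpos: "ell > 0" unfolding ell_def ellG_def using beta2 c_pos by simp
  have ddpos: "dd > 0" unfolding dd_def ddG_def by simp
  have gradm: "grad \<in> borel_measurable borel" using lip_cont lip by blast
  have Xm: "(\<lambda>\<omega>. X t \<omega>) \<in> borel_measurable M" for t
    unfolding X_def by (rule meas_X) (rule g_meas)
  have gXm: "(\<lambda>\<omega>. grad (X t \<omega>) $ i) \<in> borel_measurable M" for t i
    using vec_nth_meas[OF measurable_compose[OF Xm gradm]] by simp
  have etam: "(\<lambda>\<omega>. etaG beta2 b1 x1 (\<lambda>s. g s \<omega>) n i) \<in> borel_measurable M" for n i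
    unfolding etaG_def vhG_def by (intro borel_measurable_divide borel_measurable_const meas_sqrt_vh g_meas)
  have mmm: "(\<lambda>\<omega>. mmG beta2 b1 x1 (\<lambda>s. g s \<omega>) n $ i) \<in> borel_measurable M" for n i
    unfolding mmG_def by (intro meas_mm g_meas)
  have gcm: "(\<lambda>\<omega>. g t \<omega> $ i) \<in> borel_measurable M" for t i by (rule vec_nth_meas[OF g_meas])
  have PPm: "PP t \<in> borel_measurable M" for t
    unfolding PP_def PG_def XG_def X_def[symmetric]
    by (intro borel_measurable_sum borel_measurable_times gXm etam mmm)
  have AAm: "AA t \<in> borel_measurable M" for t
    unfolding AA_def AG_def XG_def X_def[symmetric]
    by (intro borel_measurable_sum borel_measurable_times gXm etam gcm)
  have EEeq: "EE t \<omega> = PP t \<omega> - b1 t * PP (t - 1) \<omega> - (1 - b1 t) * AA t \<omega>" for t \<omega>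
    by (simp add: EE_def PP_def AA_def ErrG_def)
  have EEm: "EE t \<in> borel_measurable M" for t
    unfolding EEeq[abs_def] by (intro borel_measurable_diff borel_measurable_times PPm AAm borel_measurable_const)
  have GNm: "GN t \<in> borel_measurable M" for t
    unfolding GN_def[abs_def] by (intro borel_measurable_power measurable_compose[OF measurable_compose[OF Xm gradm] borel_measurable_norm])
  have GNb: "0 \<le> GN t \<omega> \<and> GN t \<omega> \<le> Hp^2" for t \<omega>
    unfolding GN_def using gb[of "X t \<omega>"] by (simp add: power_mono)
  have Pb: "AE \<omega> in M. \<bar>PP t \<omega>\<bar> \<le> dd * Hp^2 / ell" for t
    using DAE by eventually_elim (simp add: PP_def dd_def ell_def det.P_bound)
  have Ab: "t \<ge> 1 \<Longrightarrow> AE \<omega> in M. \<bar>AA t \<omega>\<bar> \<le> dd * Hp^2 / ell" for t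
    using DAE by eventually_elim (simp add: AA_def dd_def ell_def det.A_bound)
  have bint: "integrable M F" if "F \<in> borel_measurable M" "AE \<omega> in M. \<bar>F \<omega>\<bar> \<le> B" for F :: "'w \<Rightarrow> real" and B
  proof (rule Bochner_Integration.integrable_bound[OF integrable_const[of "\<bar>B\<bar>"] that(1)])
    show "AE \<omega> in M. norm (F \<omega>) \<le> norm \<bar>B\<bar>" using that(2) by eventually_elim auto
  qed
  have Pint: "integrable M (PP t)" for t using bint[OF PPm Pb] .
  have Aint: "t \<ge> 1 \<Longrightarrow> integrable M (AA t)" for t using bint[OF AAm Ab] by blast
  have Eint: "t \<ge> 1 \<Longrightarrow> integrable M (EE t)" for t
    unfolding EEeq[abs_def] using Pint[of t] Pint[of "t - 1"] Aint[of t]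
    by (intro Bochner_Integration.integrable_diff integrable_mult_right) auto
  have GNint: "integrable M (GN t)" for t using bint[OF GNm, of t "Hp^2"] GNb by (simp add: abs_of_nonneg)
  define p where "p t = (\<integral>\<omega>. PP t \<omega> \<partial>M)" for t
  define a where "a t = (\<integral>\<omega>. AA t \<omega> \<partial>M)" for t
  define e where "e t = (\<integral>\<omega>. \<bar>EE t \<omega>\<bar> \<partial>M)" for t
  define G where "G t = (\<integral>\<omega>. GN t \<omega> \<partial>M)" for t
  have p0: "p 0 = 0" unfolding p_def PP_def PG_def etaG_def by simp
  have e_nonneg: "e t \<ge> 0" for t unfolding e_def by simp
  have G_nonneg: "G t \<ge> 0" for t unfolding G_def using GNb by (simp add: integral_nonneg_AE)
  have G_le: "G t \<le> Hp^2" for t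
  proof -
    have "G t \<le> (\<integral>\<omega>. Hp^2 \<partial>M)" unfolding G_def
      using GNint GNb by (intro integral_mono) auto
    then show ?thesis by simp
  qed
  have rec: "p t \<ge> b1 t * p (t - 1) + (1 - b1 t) * a t - e t" if t: "t \<ge> 1" for t
  proof -
    have eq: "PP t \<omega> = EE t \<omega> + b1 t * PP (t - 1) \<omega> + (1 - b1 t) * AA t \<omega>" for \<omega>
      using EEeq[of t \<omega>] by simp
    have "p t = (\<integral>\<omega>. EE t \<omega> + b1 t * PP (t - 1) \<omega> + (1 - b1 t) * AA t \<omega> \<partial>M)"
      unfolding p_def eq by simp
    also have "\<dots> = (\<integral>\<omega>. EE t \<omega> \<partial>M) + b1 t * p (t - 1) + (1 - b1 t) * a t"
      using Eint[OF t] Pint Aint[OF t] by (simp add: p_def a_def)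
    finally have 1: "p t = (\<integral>\<omega>. EE t \<omega> \<partial>M) + b1 t * p (t - 1) + (1 - b1 t) * a t" .
    have "- e t \<le> (\<integral>\<omega>. EE t \<omega> \<partial>M)"
    proof -
      have "(\<integral>\<omega>. - \<bar>EE t \<omega>\<bar> \<partial>M) \<le> (\<integral>\<omega>. EE t \<omega> \<partial>M)"
        using Eint[OF t] by (intro integral_mono) auto
      then show ?thesis by (simp add: e_def)
    qed
    with 1 show ?thesis by linarith
  qed
  have psum: "(\<Sum>t=1..T. p t) \<le> f x1 - fmin + \<bar>L\<bar> * K^2 * harm T" for T
  proof -
    have "(\<Sum>t=1..T. p t) = (\<integral>\<omega>. (\<Sum>t=1..T. PP t \<omega>) \<partial>M)"
      unfolding p_def using Pint by (simp add: integral_sum)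
    also have "\<dots> \<le> (\<integral>\<omega>. f x1 - fmin + \<bar>L\<bar> * K^2 * harm T \<partial>M)"
    proof (rule integral_mono_AE)
      show "integrable M (\<lambda>\<omega>. \<Sum>t = 1..T. PP t \<omega>)" using Pint by auto
      show "AE \<omega> in M. (\<Sum>t = 1..T. PP t \<omega>) \<le> f x1 - fmin + \<bar>L\<bar> * K^2 * harm T"
        using DAE
      proof eventually_elim
        case (elim \<omega>)
        have "(\<Sum>t = 1..T. PP t \<omega>) \<le> f x1 - f (XG beta2 b1 x1 (\<lambda>s. g s \<omega>) (Suc T)) + \<bar>L\<bar> * K^2 * harm T"
          using det.descent_sum[OF elim, of x1 T] by (simp add: PP_def K_def)
        then show ?case using fmin[of "XG beta2 b1 x1 (\<lambda>s. g s \<omega>) (Suc T)"] by simp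
      qed
    qed simp
    finally show ?thesis by simp
  qed
  have esum: "(\<Sum>t=1..T. e t) \<le> 3 * dd * Hp^2 / ell + \<bar>L\<bar> * K^2 * harm T" if T: "T \<ge> 1" for T
  proof -
    have "(\<Sum>t=1..T. e t) = (\<integral>\<omega>. (\<Sum>t=1..T. \<bar>EE t \<omega>\<bar>) \<partial>M)"
      unfolding e_def using Eint by (simp add: integral_sum)
    also have "\<dots> \<le> (\<integral>\<omega>. 3 * dd * Hp^2 / ell + \<bar>L\<bar> * K^2 * harm T \<partial>M)"
    proof (rule integral_mono_AE)
      show "integrable M (\<lambda>\<omega>. \<Sum>t = 1..T. \<bar>EE t \<omega>\<bar>)" using Eint by auto
      show "AE \<omega> in M. (\<Sum>t = 1..T. \<bar>EE t \<omega>\<bar>) \<le> 3 * dd * Hp^2 / ell + \<bar>L\<bar> * K^2 * harm T"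
        using DAE
      proof eventually_elim
        case (elim \<omega>)
        show ?case using det.Err_sum[OF elim T, of x1] by (simp add: EE_def K_def dd_def ell_def)
      qed
    qed simp
    finally show ?thesis by simp
  qed
  have a_lower: "a t \<ge> (1 / sqrt (real (t - 1))) / Hp * G t" if t: "t \<ge> 1" for t
  proof -
    define F where "F = past_sigma M g t"
    have fm: "finite_measure M" by (rule finite_measureI) simp
    have "finite_measure_subalgebra M F"
      unfolding finite_measure_subalgebra_def finite_measure_subalgebra_axioms_def F_def
      using fm past_sigma_sub[of g M t] g_meas by blast
    then interpret S: sigma_finite_subalgebra M F by (rule finite_measure_subalgebra_is_sigma_finite)
    define W where "W i \<omega> = grad (X t \<omega>) $ i * etaG beta2 b1 x1 (\<lambda>s. g s \<omega>) (t - 1) i" for i \<omega>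
    define Z where "Z i = (\<lambda>\<omega>. zeta t \<omega> $ i)" for i
    define BB where "BB \<omega> = (\<Sum>i\<in>UNIV. (grad (X t \<omega>) $ i)^2 * etaG beta2 b1 x1 (\<lambda>s. g s \<omega>) (t - 1) i)" for \<omega>
    have gF: "\<And>s. 1 \<le> s \<Longrightarrow> s < t \<Longrightarrow> g s \<in> borel_measurable F"
      unfolding F_def by (rule past_sigma_meas[of g M], rule g_meas)
    have XF: "(\<lambda>\<omega>. X t \<omega>) \<in> borel_measurable F" unfolding X_def by (rule meas_X) (rule gF)
    have WF: "W i \<in> borel_measurable F" for i
    proof -
      have 1: "(\<lambda>\<omega>. grad (X t \<omega>) $ i) \<in> borel_measurable F"
        using vec_nth_meas[OF measurable_compose[OF XF gradm]] by simp
      have 2: "(\<lambda>\<omega>. etaG beta2 b1 x1 (\<lambda>s. g s \<omega>) (t - 1) i) \<in> borel_measurable F"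
        unfolding etaG_def vhG_def using gF t
        by (intro borel_measurable_divide borel_measurable_const meas_sqrt_vh) auto
      show ?thesis unfolding W_def[abs_def] by (intro borel_measurable_times 1 2)
    qed
    have WM: "W i \<in> borel_measurable M" for i
      unfolding W_def[abs_def] by (intro borel_measurable_times gXm etam)
    have Zeq: "Z i \<omega> = g t \<omega> $ i - grad (X t \<omega>) $ i" if "\<omega> \<in> space M" for i \<omega>
      using noise[OF t that] by (simp add: Z_def X_def)
    have ZM: "Z i \<in> borel_measurable M" for i
    proof -
      have "(\<lambda>\<omega>. g t \<omega> $ i - grad (X t \<omega>) $ i) \<in> borel_measurable M"
        by (intro borel_measurable_diff gcm gXm)
      then show ?thesis using Zeq by (subst measurable_cong) auto
    qed
    have WZint: "integrable M (\<lambda>\<omega>. W i \<omega> * Z i \<omega>)" for i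
    proof (rule bint)
      show "(\<lambda>\<omega>. W i \<omega> * Z i \<omega>) \<in> borel_measurable M" by (intro borel_measurable_times WM ZM)
      show "AE \<omega> in M. \<bar>W i \<omega> * Z i \<omega>\<bar> \<le> (Hp * (1 / ell)) * (2 * Hp)"
        using DAE
      proof (rule AE_mp, intro AE_I2 impI)
        fix \<omega> assume w: "\<omega> \<in> space M" and D: "det beta2 beta1 Hp c L b1 (\<lambda>s. g s \<omega>) f grad"
        have gr: "\<bar>grad y $ i\<bar> \<le> Hp" for y using det.grad_comp[OF D] .
        have W: "\<bar>W i \<omega>\<bar> \<le> Hp * (1 / ell)"
          unfolding W_def abs_mult using gr det.eta_le1[OF D, of x1 "t - 1" i] det.eta_nonneg[OF D, of x1 "t - 1" i] Hp
          by (intro mult_mono) (auto simp: ell_def)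
        have Zb: "\<bar>Z i \<omega>\<bar> \<le> 2 * Hp"
          using Zeq[OF w] det.gs_comp[OF D t, of i] gr[of "X t \<omega>"] by (simp add: abs_le_iff)
        show "\<bar>W i \<omega> * Z i \<omega>\<bar> \<le> (Hp * (1 / ell)) * (2 * Hp)"
          unfolding abs_mult using W Zb by (intro mult_mono) auto
      qed
    qed
    have WZ0: "(\<integral>\<omega>. W i \<omega> * Z i \<omega> \<partial>M) = 0" for i
    proof -
      have "(\<integral>\<omega>. W i \<omega> * real_cond_exp M F (Z i) \<omega> \<partial>M) = (\<integral>\<omega>. W i \<omega> * Z i \<omega> \<partial>M)"
        by (rule S.real_cond_exp_intg(2)[OF WZint WF ZM])
      moreover have "(\<integral>\<omega>. W i \<omega> * real_cond_exp M F (Z i) \<omega> \<partial>M) = (\<integral>\<omega>. 0 \<partial>M)"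
      proof (rule integral_cong_AE)
        show "(\<lambda>\<omega>. W i \<omega> * real_cond_exp M F (Z i) \<omega>) \<in> borel_measurable M"
          using S.real_cond_exp_intg(1)[OF WZint WF ZM] by (rule borel_measurable_integrable)
        show "AE \<omega> in M. W i \<omega> * real_cond_exp M F (Z i) \<omega> = 0"
          using noise_mean[OF t, of i] unfolding Z_def F_def by eventually_elim simp
      qed simp
      ultimately show ?thesis by simp
    qed
    have AAeq: "AA t \<omega> = BB \<omega> + (\<Sum>i\<in>UNIV. W i \<omega> * Z i \<omega>)" if w: "\<omega> \<in> space M" for \<omega>
    proof -
      have "AA t \<omega> = (\<Sum>i\<in>UNIV. W i \<omega> * g t \<omega> $ i)"
        by (simp add: AA_def AG_def W_def XG_def X_def mult.assoc)
      also have "\<dots> = (\<Sum>i\<in>UNIV. W i \<omega> * (grad (X t \<omega>) $ i) + W i \<omega> * Z i \<omega>)"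
      proof (rule sum.cong)
        fix i
        have "g t \<omega> $ i = grad (X t \<omega>) $ i + Z i \<omega>" using Zeq[OF w, of i] by simp
        then show "W i \<omega> * g t \<omega> $ i = W i \<omega> * (grad (X t \<omega>) $ i) + W i \<omega> * Z i \<omega>"
          by (simp add: distrib_left)
      qed simp
      also have "\<dots> = BB \<omega> + (\<Sum>i\<in>UNIV. W i \<omega> * Z i \<omega>)"
        unfolding sum.distrib BB_def W_def by (simp add: power2_eq_square ac_simps)
      finally show ?thesis .
    qed
    have BBint: "integrable M BB"
    proof -
      have "integrable M (\<lambda>\<omega>. AA t \<omega> - (\<Sum>i\<in>UNIV. W i \<omega> * Z i \<omega>))"
        using Aint[OF t] WZint by (intro Bochner_Integration.integrable_diff integrable_sum) auto
      moreover have "\<omega> \<in> space M \<Longrightarrow> AA t \<omega> - (\<Sum>i\<in>UNIV. W i \<omega> * Z i \<omega>) = BB \<omega>" for \<omega>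
        using AAeq by simp
      ultimately show ?thesis using Bochner_Integration.integrable_cong[of M M] by (metis (no_types, lifting))
    qed
    have "a t = (\<integral>\<omega>. BB \<omega> + (\<Sum>i\<in>UNIV. W i \<omega> * Z i \<omega>) \<partial>M)"
      unfolding a_def using AAeq by (intro Bochner_Integration.integral_cong) auto
    also have "\<dots> = (\<integral>\<omega>. BB \<omega> \<partial>M)"
      using BBint WZint WZ0 by (simp add: integral_sum)
    also have "\<dots> \<ge> (\<integral>\<omega>. (1 / sqrt (real (t - 1))) / Hp * GN t \<omega> \<partial>M)"
    proof (rule integral_mono_AE)
      show "integrable M (\<lambda>\<omega>. (1 / sqrt (real (t - 1))) / Hp * GN t \<omega>)" using GNint by simp
      show "integrable M BB" by (rule BBint)
      show "AE \<omega> in M. (1 / sqrt (real (t - 1))) / Hp * GN t \<omega> \<le> BB \<omega>"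
        using DAE
      proof eventually_elim
        case (elim \<omega>)
        show ?case using det.B_lower[OF elim t, of x1] unfolding GN_def BB_def X_def XG_def .
      qed
    qed
    finally show ?thesis by (simp add: G_def)
  qed
  have a_nonneg: "a t \<ge> 0" if t: "t \<ge> 1" for t
  proof -
    have "0 \<le> (1 / sqrt (real (t - 1))) / Hp * G t" using Hp G_nonneg[of t] by simp
    then show ?thesis using a_lower[OF t] by linarith
  qed
  have seq: "(1 - beta1) * (\<Sum>t=1..T. a t) \<le> (\<Sum>t=1..T. p t) + (\<Sum>t=1..T. e t) / (1 - beta1)" for T
    by (rule seq_lemma[of p b1 a e beta1]) (use p0 rec b1_range beta1 a_nonneg e_nonneg in auto)
  have Gt: "(1 / sqrt (real t)) * G t \<le> Hp * a t + (if t = 1 then Hp^2 else 0)" if t: "t \<ge> 1" for t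
  proof (cases "t = 1")
    case True
    have "0 \<le> Hp * a 1" using a_nonneg[of 1] Hp by simp
    then show ?thesis using G_le[of 1] True by simp
  next
    case False
    have "(1 / sqrt (real t)) * G t \<le> (1 / sqrt (real (t - 1))) * G t"
      using False t G_nonneg[of t] by (intro mult_right_mono inv_sqrt_mono) auto
    also have "\<dots> = Hp * ((1 / sqrt (real (t - 1))) / Hp * G t)" using Hp by simp
    also have "\<dots> \<le> Hp * a t" using a_lower[OF t] Hp by (intro mult_left_mono) auto
    finally show ?thesis using False by simp
  qed
  define C0 where "C0 = f x1 - fmin"
  define C2 where "C2 = \<bar>L\<bar> * K^2"
  define C3 where "C3 = 3 * dd * Hp^2 / ell"
  have C2: "C2 \<ge> 0" unfolding C2_def by simp
  have b1p: "1 - beta1 > 0" using beta1 by simp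
  define Q2 where "Q2 = Hp * (C2 * (1 + 1 / (1 - beta1))) / (1 - beta1)"
  define Q1 where "Q1 = Hp^2 + Hp * (C0 + C3 / (1 - beta1)) / (1 - beta1) + Q2"
  have Q2: "Q2 \<ge> 0" unfolding Q2_def using Hp C2 b1p by simp
  have Ssum: "(\<Sum>t=1..T. (1 / sqrt (real t)) * G t) \<le> Q1 + Q2 * ln (real T)" if T: "T \<ge> 1" for T
  proof -
    define h where "h = (harm T :: real)"
    have h: "h \<le> 1 + ln (real T)" unfolding h_def by (rule harm_le_ln[OF T])
    have "(\<Sum>t=1..T. (1 / sqrt (real t)) * G t) \<le> (\<Sum>t=1..T. Hp * a t + (if t = 1 then Hp^2 else 0))"
      by (intro sum_mono Gt) auto
    also have "\<dots> = Hp * (\<Sum>t=1..T. a t) + Hp^2"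
      using T by (simp add: sum.distrib sum_distrib_left)
    also have "(\<Sum>t=1..T. a t) \<le> (C0 + C2 * h + (C3 + C2 * h) / (1 - beta1)) / (1 - beta1)"
    proof -
      have "(1 - beta1) * (\<Sum>t=1..T. a t) \<le> C0 + C2 * h + (C3 + C2 * h) / (1 - beta1)"
      proof -
        have "(\<Sum>t=1..T. e t) / (1 - beta1) \<le> (C3 + C2 * h) / (1 - beta1)"
          using esum[OF T] b1p by (intro divide_right_mono) (auto simp: C3_def C2_def h_def)
        then show ?thesis using seq[of T] psum[of T] by (simp add: C0_def C2_def h_def)
      qed
      then show ?thesis using b1p by (subst pos_le_divide_eq) (auto simp: mult.commute)
    qed
    also have "Hp * ((C0 + C2 * h + (C3 + C2 * h) / (1 - beta1)) / (1 - beta1)) + Hp^2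
        = Hp^2 + Hp * (C0 + C3 / (1 - beta1)) / (1 - beta1) + Q2 * h"
    proof -
      have key: "\<And>q::real. q > 0 \<Longrightarrow> Hp * ((C0 + C2 * h + (C3 + C2 * h) / q) / q) + Hp^2
          = Hp^2 + Hp * (C0 + C3 / q) / q + Hp * (C2 * (1 + 1 / q)) / q * h"
        by (simp add: field_simps)
      show ?thesis unfolding Q2_def using key[OF b1p] .
    qed
    also have "\<dots> \<le> Hp^2 + Hp * (C0 + C3 / (1 - beta1)) / (1 - beta1) + Q2 * (1 + ln (real T))"
      using h Q2 by (intro add_left_mono mult_left_mono) auto
    also have "\<dots> = Q1 + Q2 * ln (real T)" unfolding Q1_def by (simp add: algebra_simps)
    finally show ?thesis using Hp by (simp add: mult_left_mono)
  qed
  have Geq: "(\<lambda>t. \<integral>\<omega>. (norm (grad (amsgrad_x beta2 b1 x1 (\<lambda>s. g s \<omega>) t)))^2 \<partial>M) = G"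
    by (rule ext) (simp add: G_def GN_def X_def)
  show ?thesis
  proof (intro exI allI impI)
    fix T :: nat assume T: "T \<ge> 1"
    define m where "m = Min (G ` {1..T})"
    have fin: "finite (G ` {1..T})" and ne: "G ` {1..T} \<noteq> {}" using T by auto
    have mle: "m \<le> G t" if "t \<in> {1..T}" for t unfolding m_def using fin that by auto
    have m0: "m \<ge> 0" unfolding m_def using fin ne G_nonneg by (auto simp: Min_ge_iff)
    have "m * sqrt (real T) \<le> m * (\<Sum>t=1..T. 1 / sqrt (real t))"
      using m0 sum_inv_sqrt[OF T] by (intro mult_left_mono) auto
    also have "\<dots> = (\<Sum>t=1..T. (1 / sqrt (real t)) * m)" by (simp add: sum_distrib_left mult.commute)
    also have "\<dots> \<le> (\<Sum>t=1..T. (1 / sqrt (real t)) * G t)"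
      using mle by (intro sum_mono mult_left_mono) auto
    also have "\<dots> \<le> Q1 + Q2 * ln (real T)" by (rule Ssum[OF T])
    finally have "m * sqrt (real T) \<le> Q1 + Q2 * ln (real T)" .
    moreover have "sqrt (real T) > 0" using T by simp
    ultimately have "m \<le> (Q1 + Q2 * ln (real T)) / sqrt (real T)" by (simp add: field_simps)
    then show "Min ((\<lambda>t. \<integral>\<omega>. (norm (grad (amsgrad_x beta2 b1 x1 (\<lambda>s. g s \<omega>) t)))^2 \<partial>M) ` {1..T})
       \<le> (Q1 + Q2 * ln (real T)) / sqrt (real T)" unfolding Geq m_def .
  qed
qed

end
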